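(* Let $P=v_1v_2\cdots v_\ell$ be a path whose nodes carry bags $B_{v_j}$ such that, for every vertex, the set of nodes whose bags contain it is a contiguous subpath. Let $\{\mu_{B_{v_j}}\}$ be distributions on $B_{v_j}$-assignments whose marginals agree on intersections of bags. Let $v$ be an internal node of $P$ whose two neighbours $u,w$ on $P$ are also internal nodes of $P$ and satisfy $B_v\cap B_w\subseteq B_u$ (here $u$ may precede or follow $v$). Let $P'$ be the path obtained from $P$ by deleting $v$ and adding the edge $\{u,w\}$, and let $B(P')=\bigcup_{x\in V(P')}B_x$. Let $\mathcal A$ be the distribution of the output of SC-Round run on $P$ starting at $v_1$, and $\mathcal A'$ the distribution of the output of SC-Round run on $P'$ starting at $v_1$. Then $\mathcal A'$ equals the restriction (marginal) of $\mathcal A$ to $B(P')$.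
   Context: For a finite set $X$, an $X$-assignment is a map $X\to\{0,1\}$. SC-Round on a path starting at $v_1$: sample $f|_{B_{v_1}}$ from $\mu_{B_{v_1}}$; then for $j=2,3,\dots$ along the path, with previous node $v'$, let $B^+=B_{v_j}\cap B_{v'}$ and $B^-=B_{v_j}\setminus B^+$, and sample $f|_{B^-}$ with $\Pr[f|_{B^-}=g'] = \Pr_{g\sim\mu_{B_{v_j}}}[g|_{B^-}=g'\mid g|_{B^+}=f|_{B^+}]$. The output is the assignment $f$ on the union of all bags. *)

theory Defs
  imports "HOL-Probability.Probability_Mass_Function"
begin

text \<open>An X-assignment is a partial map f :: 'v \<rightharpoonup> bool with dom f = X.
  A path is a list of distinct nodes; consecutive list entries are adjacent.\<close>

text \<open>Continuation of SC-Round: prev is the previous node, f the assignment built so far.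
  For the next node x: B+ = B x \<inter> B prev, B- = B x - B+; sample g from mu x conditioned
  on g|B+ = f|B+ and extend f by g|B-.\<close>
fun sc_from :: "('n \<Rightarrow> 'v set) \<Rightarrow> ('n \<Rightarrow> ('v \<rightharpoonup> bool) pmf) \<Rightarrow> 'n \<Rightarrow> 'n list
                 \<Rightarrow> ('v \<rightharpoonup> bool) \<Rightarrow> ('v \<rightharpoonup> bool) pmf" where
  "sc_from B mu prev [] f = return_pmf f"
| "sc_from B mu prev (x # xs) f =
     bind_pmf (cond_pmf (mu x) {g. g |` (B x \<inter> B prev) = f |` (B x \<inter> B prev)})
       (\<lambda>g. sc_from B mu x xs (f ++ (g |` (B x - (B x \<inter> B prev)))))"

fun sc_round :: "('n \<Rightarrow> 'v set) \<Rightarrow> ('n \<Rightarrow> ('v \<rightharpoonup> bool) pmf) \<Rightarrow> 'n list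
                 \<Rightarrow> ('v \<rightharpoonup> bool) pmf" where
  "sc_round B mu [] = return_pmf Map.empty"
| "sc_round B mu (x # xs) = bind_pmf (mu x) (\<lambda>g. sc_from B mu x xs (g |` B x))"

end

theory Submission
  imports Defs
begin

lemma measure_cond_pmf:
  assumes "set_pmf q \<inter> E \<noteq> {}"
  shows "measure (measure_pmf (cond_pmf q E)) A = measure q (E \<inter> A) / measure q E"
  unfolding cond_pmf.rep_eq[OF assms]
  by (subst measure_uniform_measure)
     (auto simp: emeasure_measure_pmf_not_zero[OF assms] measure_pmf.emeasure_finite)

lemma cond_cond_pmf:
  assumes "A \<subseteq> E" "set_pmf q \<inter> A \<noteq> {}"
  shows "cond_pmf (cond_pmf q E) A = cond_pmf q A"
proof -
  have E: "set_pmf q \<inter> E \<noteq> {}" using assms by blast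
  have A: "set_pmf (cond_pmf q E) \<inter> A \<noteq> {}" using assms E by auto
  show ?thesis
  proof (rule pmf_eqI)
    fix x
    show "pmf (cond_pmf (cond_pmf q E) A) x = pmf (cond_pmf q A) x"
      using assms(1) measure_measure_pmf_not_zero[OF E]
      by (auto simp: pmf_cond[OF A] pmf_cond[OF assms(2)] pmf_cond[OF E] measure_cond_pmf[OF E]
           Int_absorb1)
  qed
qed

lemma restr_sub: assumes "S \<subseteq> T" "h |` T = g |` T" shows "h |` S = g |` S"
proof -
  have "h |` T |` S = g |` T |` S" using assms(2) by simp
  then show ?thesis using assms(1) by (simp add: restrict_restrict Int_absorb1)
qed
lemma meas_pre: "measure (measure_pmf q) {h. P (h |` T)} = measure (map_pmf (\<lambda>g. g |` T) q) {t. P t}"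
  by (simp add: vimage_def)

lemma tr:
  assumes e: "map_pmf (\<lambda>g. g |` T) p = map_pmf (\<lambda>g. g |` T) q" and x: "x \<in> set_pmf p"
  shows "\<exists>y\<in>set_pmf q. y |` T = x |` T"
proof -
  have "x |` T \<in> set_pmf (map_pmf (\<lambda>g. g |` T) p)" using x by simp
  then have "x |` T \<in> set_pmf (map_pmf (\<lambda>g. g |` T) q)" using e by simp
  then show ?thesis by auto
qed

lemma G:
  fixes p q :: "('v \<rightharpoonup> 'b) pmf"
  assumes eq: "map_pmf (\<lambda>g. g |` T) p = map_pmf (\<lambda>g. g |` T) q" and ST: "S \<subseteq> T"
    and ne: "set_pmf p \<inter> {g. g |` S = s} \<noteq> {}"
  shows "bind_pmf (cond_pmf p {g. g |` S = s}) (\<lambda>g. cond_pmf q {h. h |` T = g |` T})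
         = cond_pmf q {h. h |` S = s}"
proof -
  define E where "E = {g :: 'v \<rightharpoonup> 'b. g |` S = s}"
  have ST': "\<And>h g. h |` T = g |` T \<Longrightarrow> h |` S = g |` S" using restr_sub[OF ST] .
  have neq: "set_pmf q \<inter> E \<noteq> {}"
  proof -
    obtain g where g: "g \<in> set_pmf p" "g |` S = s" using ne by auto
    obtain h where h: "h \<in> set_pmf q" "h |` T = g |` T" using tr[OF eq g(1)] by auto
    have "h |` S = s" using ST'[OF h(2)] g(2) by simp
    then have "h \<in> set_pmf q \<inter> E" using h(1) unfolding E_def by simp
    then show ?thesis by blast
  qed
  have nep: "set_pmf p \<inter> E \<noteq> {}" using ne unfolding E_def .
  have mE: "\<And>r. measure (measure_pmf r) E = measure (map_pmf (\<lambda>g. g |` T) r) {t. t |` S = s}"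
  proof -
    fix r :: "('v \<rightharpoonup> 'b) pmf"
    have "E = {h. (\<lambda>t. t |` S = s) (h |` T)}"
      unfolding E_def using ST by (simp add: restrict_restrict Int_absorb1)
    then show "measure (measure_pmf r) E = measure (map_pmf (\<lambda>g. g |` T) r) {t. t |` S = s}"
      using meas_pre[where P="\<lambda>t. t |` S = s" and q=r and T=T] by simp
  qed
  have cancel: "bind_pmf (cond_pmf p E) (\<lambda>x. cond_pmf (cond_pmf q E) {y. x |` T = y |` T}) = cond_pmf q E"
  proof (rule bind_cond_pmf_cancel)
    fix x assume "x \<in> set_pmf (cond_pmf p E)"
    then have x: "x \<in> set_pmf p" "x \<in> E" using nep by auto
    obtain y where y: "y \<in> set_pmf q" "y |` T = x |` T" using tr[OF eq x(1)] by auto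
    have "y \<in> E" using ST'[OF y(2)] x(2) by (simp add: E_def)
    then have "y \<in> set_pmf (cond_pmf q E)" using neq y by simp
    then show "set_pmf (cond_pmf q E) \<inter> {y. x |` T = y |` T} \<noteq> {}"
      using y by auto
  next
    fix y assume "y \<in> set_pmf (cond_pmf q E)"
    then have y: "y \<in> set_pmf q" "y \<in> E" using neq by auto
    obtain x where x: "x \<in> set_pmf p" "x |` T = y |` T" using tr[OF eq[symmetric] y(1)] by auto
    have "x \<in> E" using ST'[OF x(2)] y(2) by (simp add: E_def)
    then have "x \<in> set_pmf (cond_pmf p E)" using nep x by simp
    then show "set_pmf (cond_pmf p E) \<inter> {x. x |` T = y |` T} \<noteq> {}"
      using x by auto
  next
    fix x y assume x: "x \<in> set_pmf (cond_pmf p E)" and y: "y \<in> set_pmf (cond_pmf q E)"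
      and xy: "x |` T = y |` T"
    have xE: "x \<in> E" using x nep by auto
    have hE: "h \<in> E" if "h |` T = x |` T" for h
    proof -
      have "h |` S = x |` S" by (rule ST'[OF that])
      then show ?thesis using xE by (simp add: E_def)
    qed
    have s1: "E \<inter> {y. x |` T = y |` T} = {h. h |` T = x |` T}"
      using hE by auto
    have s2: "E \<inter> {x. x |` T = y |` T} = {h. h |` T = x |` T}"
      using hE xy by auto
    have m1: "\<And>r. measure (measure_pmf r) {h. h |` T = x |` T} = measure (map_pmf (\<lambda>g. g |` T) r) {t. t = x |` T}"
      by (rule meas_pre[where P="\<lambda>t. t = x |` T"])
    show "measure (measure_pmf (cond_pmf q E)) {y. x |` T = y |` T} =
          measure (measure_pmf (cond_pmf p E)) {x. x |` T = y |` T}"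
      unfolding measure_cond_pmf[OF neq] measure_cond_pmf[OF nep] s1 s2 mE m1 eq ..
  qed
  have "bind_pmf (cond_pmf p E) (\<lambda>g. cond_pmf q {h. h |` T = g |` T})
      = bind_pmf (cond_pmf p E) (\<lambda>x. cond_pmf (cond_pmf q E) {y. x |` T = y |` T})"
  proof (rule bind_pmf_cong[OF refl])
    fix x assume "x \<in> set_pmf (cond_pmf p E)"
    then have x: "x \<in> set_pmf p" "x \<in> E" using nep by auto
    obtain y where y: "y \<in> set_pmf q" "y |` T = x |` T" using tr[OF eq x(1)] by auto
    have "cond_pmf (cond_pmf q E) {y. x |` T = y |` T} = cond_pmf q {y. x |` T = y |` T}"
    proof (rule cond_cond_pmf)
      show "{y. x |` T = y |` T} \<subseteq> E"
      proof
        fix h assume "h \<in> {y. x |` T = y |` T}"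
        then have "h |` S = x |` S" using ST'[of h x] by simp
        then show "h \<in> E" using x(2) by (simp add: E_def)
      qed
      show "set_pmf q \<inter> {y. x |` T = y |` T} \<noteq> {}" using y by auto
    qed
    then show "cond_pmf q {h. h |` T = x |` T} = cond_pmf (cond_pmf q E) {y. x |` T = y |` T}"
      by (simp add: eq_commute)
  qed
  note res = trans[OF this cancel]
  show ?thesis unfolding E_def[symmetric] by (rule res)
qed

lemma step_restrict:
  assumes "dom g = A" "g |` (A \<inter> C) = f |` (A \<inter> C)"
  shows "(f ++ g |` (A - (A \<inter> C))) |` A = g"
proof
  fix z
  show "((f ++ g |` (A - (A \<inter> C))) |` A) z = g z"
  proof (cases "z \<in> A")
    case False
    then show ?thesis using assms(1) by (auto simp: restrict_map_def)
  next
    case zA: True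
    show ?thesis
    proof (cases "z \<in> C")
      case True
      have "(g |` (A \<inter> C)) z = (f |` (A \<inter> C)) z" using assms(2) by simp
      then show ?thesis using zA True by (simp add: restrict_map_def map_add_def)
    next
      case False
      obtain y where "g z = Some y" using zA assms(1) by auto
      then show ?thesis using zA False by (simp add: restrict_map_def map_add_def)
    qed
  qed
qed

lemma map_add_restrict_self: "f ++ f |` A = f"
  by (rule ext) (simp add: map_add_def restrict_map_def split: option.split)

lemma dom_sc: "h \<in> set_pmf (sc_from B mu prev xs f) \<Longrightarrow> dom h \<subseteq> dom f \<union> (\<Union>x\<in>set xs. B x)"
proof (induction xs arbitrary: prev f)
  case Nil
  then show ?case by simp
next
  case (Cons x xs)
  then obtain g where "h \<in> set_pmf (sc_from B mu x xs (f ++ g |` (B x - (B x \<inter> B prev))))"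
    by auto
  from Cons.IH[OF this] show ?case by auto
qed

lemma sc_append:
  "sc_from B mu prev (xs @ ys) f = bind_pmf (sc_from B mu prev xs f) (\<lambda>f'. sc_from B mu (last (prev#xs)) ys f')"
  by (induction xs arbitrary: prev f) (simp_all add: bind_return_pmf bind_assoc_pmf)

lemma step_ne:
  assumes cons: "map_pmf (\<lambda>g. g |` (B prev \<inter> B x)) (mu prev) = map_pmf (\<lambda>g. g |` (B prev \<inter> B x)) (mu x)"
    and inv: "f |` B prev \<in> set_pmf (mu prev)"
  shows "set_pmf (mu x) \<inter> {g. g |` (B x \<inter> B prev) = f |` (B x \<inter> B prev)} \<noteq> {}"
proof -
  obtain g where g: "g \<in> set_pmf (mu x)" "g |` (B prev \<inter> B x) = (f |` B prev) |` (B prev \<inter> B x)"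
    using tr[OF cons inv] by auto
  have "(f |` B prev) |` (B prev \<inter> B x) = f |` (B x \<inter> B prev)"
    by (simp add: restrict_restrict Int_commute Int_left_commute)
  then have "g |` (B x \<inter> B prev) = f |` (B x \<inter> B prev)" using g(2) by (simp add: Int_commute)
  then show ?thesis using g(1) by blast
qed

lemma step_facts:
  assumes supp: "\<And>x. x \<in> N \<Longrightarrow> set_pmf (mu x) \<subseteq> {f. dom f = B x}"
    and cons: "\<And>x y. x \<in> N \<Longrightarrow> y \<in> N \<Longrightarrow>
        map_pmf (\<lambda>g. g |` (B x \<inter> B y)) (mu x) = map_pmf (\<lambda>g. g |` (B x \<inter> B y)) (mu y)"
    and "prev \<in> N" "x \<in> N" "f |` B prev \<in> set_pmf (mu prev)"
    and g: "g \<in> set_pmf (cond_pmf (mu x) {g. g |` (B x \<inter> B prev) = f |` (B x \<inter> B prev)})"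
  shows "g \<in> set_pmf (mu x)" "g |` (B x \<inter> B prev) = f |` (B x \<inter> B prev)" "dom g = B x"
    "(f ++ g |` (B x - (B x \<inter> B prev))) |` B x = g"
proof -
  have ne: "set_pmf (mu x) \<inter> {g. g |` (B x \<inter> B prev) = f |` (B x \<inter> B prev)} \<noteq> {}"
    by (rule step_ne[OF cons[OF assms(3,4)] assms(5)])
  show g1: "g \<in> set_pmf (mu x)" and g2: "g |` (B x \<inter> B prev) = f |` (B x \<inter> B prev)"
    using g ne by auto
  show g3: "dom g = B x" using supp[OF assms(4)] g1 by auto
  show "(f ++ g |` (B x - (B x \<inter> B prev))) |` B x = g"
    by (rule step_restrict[OF g3 g2])
qed

lemma inv_sc:
  assumes supp: "\<And>x. x \<in> N \<Longrightarrow> set_pmf (mu x) \<subseteq> {f. dom f = B x}"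
    and cons: "\<And>x y. x \<in> N \<Longrightarrow> y \<in> N \<Longrightarrow>
        map_pmf (\<lambda>g. g |` (B x \<inter> B y)) (mu x) = map_pmf (\<lambda>g. g |` (B x \<inter> B y)) (mu y)"
  shows "prev \<in> N \<Longrightarrow> set xs \<subseteq> N \<Longrightarrow> f |` B prev \<in> set_pmf (mu prev) \<Longrightarrow>
    h \<in> set_pmf (sc_from B mu prev xs f) \<Longrightarrow> h |` B (last (prev#xs)) \<in> set_pmf (mu (last (prev#xs)))"
proof (induction xs arbitrary: prev f)
  case Nil
  then show ?case by simp
next
  case (Cons x xs)
  from Cons.prems(4) obtain g where
    g: "g \<in> set_pmf (cond_pmf (mu x) {g. g |` (B x \<inter> B prev) = f |` (B x \<inter> B prev)})" and
    h: "h \<in> set_pmf (sc_from B mu x xs (f ++ g |` (B x - (B x \<inter> B prev))))"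
    by auto
  have x: "x \<in> N" using Cons.prems(2) by simp
  note sf = step_facts[OF supp cons Cons.prems(1) x Cons.prems(3) g]
  have "h |` B (last (x#xs)) \<in> set_pmf (mu (last (x#xs)))"
    by (rule Cons.IH[OF x _ _ h]) (use Cons.prems(2) sf in auto)
  then show ?case by simp
qed

lemma L1:
  assumes supp: "\<And>x. x \<in> N \<Longrightarrow> set_pmf (mu x) \<subseteq> {f. dom f = B x}"
    and cons: "\<And>x y. x \<in> N \<Longrightarrow> y \<in> N \<Longrightarrow>
        map_pmf (\<lambda>g. g |` (B x \<inter> B y)) (mu x) = map_pmf (\<lambda>g. g |` (B x \<inter> B y)) (mu y)"
  shows "prev \<in> N \<Longrightarrow> set xs \<subseteq> N \<Longrightarrow> f |` B prev \<in> set_pmf (mu prev) \<Longrightarrow>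
    sc_from B mu prev xs f = map_pmf (\<lambda>h. f ++ h) (sc_from B mu prev xs (f |` B prev))"
proof (induction xs arbitrary: prev f)
  case Nil
  then show ?case by (simp add: map_add_restrict_self)
next
  case (Cons x xs)
  define S where "S = B x \<inter> B prev"
  define D where "D = B x - S"
  define f' where "f' = f |` B prev"
  have x: "x \<in> N" and xs: "set xs \<subseteq> N" using Cons.prems(2) by auto
  have f'S: "f' |` S = f |` S" unfolding f'_def S_def
    by (simp add: restrict_restrict Int_absorb1)
  have f'inv: "f' |` B prev \<in> set_pmf (mu prev)" using Cons.prems(3) unfolding f'_def
    by (simp add: restrict_restrict)
  have "sc_from B mu prev (x # xs) f' = bind_pmf (cond_pmf (mu x) {g. g |` S = f |` S})
       (\<lambda>g. sc_from B mu x xs (f' ++ g |` D))"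
    by (simp add: S_def[symmetric] D_def[symmetric] f'S)
  then have R: "map_pmf (\<lambda>h. f ++ h) (sc_from B mu prev (x # xs) f') =
      bind_pmf (cond_pmf (mu x) {g. g |` S = f |` S}) (\<lambda>g. map_pmf (\<lambda>h. f ++ h) (sc_from B mu x xs (f' ++ g |` D)))"
    by (simp add: map_bind_pmf)
  have L: "sc_from B mu prev (x # xs) f = bind_pmf (cond_pmf (mu x) {g. g |` S = f |` S})
       (\<lambda>g. sc_from B mu x xs (f ++ g |` D))"
    by (simp add: S_def[symmetric] D_def[symmetric])
  have "bind_pmf (cond_pmf (mu x) {g. g |` S = f |` S}) (\<lambda>g. sc_from B mu x xs (f ++ g |` D))
      = bind_pmf (cond_pmf (mu x) {g. g |` S = f |` S}) (\<lambda>g. map_pmf (\<lambda>h. f ++ h) (sc_from B mu x xs (f' ++ g |` D)))"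
  proof (rule bind_pmf_cong[OF refl])
    fix g assume g: "g \<in> set_pmf (cond_pmf (mu x) {g. g |` S = f |` S})"
    note sf = step_facts[OF supp cons Cons.prems(1) x Cons.prems(3) g[unfolded S_def]]
    have g': "g \<in> set_pmf (cond_pmf (mu x) {g. g |` (B x \<inter> B prev) = f' |` (B x \<inter> B prev)})"
      using g f'S unfolding S_def by simp
    note sf' = step_facts[OF supp cons Cons.prems(1) x f'inv g']
    have e1: "(f ++ g |` D) |` B x = g" using sf(4) unfolding D_def S_def .
    have e2: "(f' ++ g |` D) |` B x = g" using sf'(4) unfolding D_def S_def .
    have I1: "sc_from B mu x xs (f ++ g |` D) = map_pmf (\<lambda>h. (f ++ g |` D) ++ h) (sc_from B mu x xs g)"
      using Cons.IH[OF x xs] e1 sf(1) by simp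
    have I2: "sc_from B mu x xs (f' ++ g |` D) = map_pmf (\<lambda>h. (f' ++ g |` D) ++ h) (sc_from B mu x xs g)"
      using Cons.IH[OF x xs] e2 sf(1) by simp
    have ff': "f ++ f' = f" unfolding f'_def by (rule map_add_restrict_self)
    have "\<And>h. f ++ ((f' ++ g |` D) ++ h) = (f ++ g |` D) ++ h"
      by (simp add: map_add_assoc ff')
    then show "sc_from B mu x xs (f ++ g |` D) = map_pmf (\<lambda>h. f ++ h) (sc_from B mu x xs (f' ++ g |` D))"
      unfolding I1 I2 by (simp add: pmf.map_comp o_def)
  qed
  then show ?case using L R unfolding f'_def by simp
qed

lemma restr_add_cong: "F |` R = F' |` R \<Longrightarrow> (F ++ D) |` R = (F' ++ D) |` R"
proof
  fix z assume e: "F |` R = F' |` R"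
  have "(F |` R) z = (F' |` R) z" using e by simp
  then show "((F ++ D) |` R) z = ((F' ++ D) |` R) z"
    by (cases "z \<in> R") (auto simp: restrict_map_def map_add_def split: option.split)
qed

lemma key_eq:
  assumes dg: "dom g = Bv" and gS: "g |` (Bv \<inter> Ba) = f |` (Bv \<inter> Ba)"
    and dh: "dom h = Bb" and hT: "h |` (Bb \<inter> Bv) = (f ++ g |` (Bv - (Bv \<inter> Ba))) |` (Bb \<inter> Bv)"
    and hS: "h |` (Bb \<inter> Ba) = f |` (Bb \<inter> Ba)"
    and H1: "\<And>z. z \<in> Bv \<Longrightarrow> z \<in> RS \<Longrightarrow> z \<in> Ba \<or> z \<in> Bb"
  shows "((f ++ g |` (Bv - (Bv \<inter> Ba))) ++ h |` (Bb - (Bb \<inter> Bv))) |` RS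
       = (f ++ h |` (Bb - (Bb \<inter> Ba))) |` RS"
proof
  fix z
  show "(((f ++ g |` (Bv - (Bv \<inter> Ba))) ++ h |` (Bb - (Bb \<inter> Bv))) |` RS) z
       = ((f ++ h |` (Bb - (Bb \<inter> Ba))) |` RS) z"
  proof (cases "z \<in> RS")
    case False then show ?thesis by simp
  next
    case zR: True
    show ?thesis
    proof (cases "z \<in> Bb")
      case zb: True
      obtain y where hy: "h z = Some y" using zb dh by auto
      have L: "((f ++ g |` (Bv - (Bv \<inter> Ba))) ++ h |` (Bb - (Bb \<inter> Bv))) z = h z"
      proof (cases "z \<in> Bv")
        case True
        have "(h |` (Bb \<inter> Bv)) z = ((f ++ g |` (Bv - (Bv \<inter> Ba))) |` (Bb \<inter> Bv)) z"
          using hT by simp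
        then show ?thesis using True zb by (simp add: map_add_def restrict_map_def)
      next
        case False then show ?thesis using zb hy by (simp add: map_add_def restrict_map_def)
      qed
      have R: "(f ++ h |` (Bb - (Bb \<inter> Ba))) z = h z"
      proof (cases "z \<in> Ba")
        case True
        have "(h |` (Bb \<inter> Ba)) z = (f |` (Bb \<inter> Ba)) z" using hS by simp
        then show ?thesis using True zb by (simp add: map_add_def restrict_map_def)
      next
        case False then show ?thesis using zb hy by (simp add: map_add_def restrict_map_def)
      qed
      show ?thesis using L R zR by simp
    next
      case zb: False
      have "z \<notin> Bv - (Bv \<inter> Ba)" using H1[of z] zR zb by auto
      then show ?thesis using zb zR by (simp add: map_add_def restrict_map_def)
    qed
  qed
qed

lemma core:
  assumes supp: "\<And>x. x \<in> N \<Longrightarrow> set_pmf (mu x) \<subseteq> {f. dom f = B x}"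
    and cons: "\<And>x y. x \<in> N \<Longrightarrow> y \<in> N \<Longrightarrow>
        map_pmf (\<lambda>g. g |` (B x \<inter> B y)) (mu x) = map_pmf (\<lambda>g. g |` (B x \<inter> B y)) (mu y)"
    and aN: "a \<in> N" and vN: "v \<in> N" and bN: "b \<in> N" and postN: "set post \<subseteq> N"
    and inv: "f |` B a \<in> set_pmf (mu a)"
    and H1: "\<And>z. z \<in> B v \<Longrightarrow> z \<in> RS \<Longrightarrow> z \<in> B a \<or> z \<in> B b"
    and Sab: "B b \<inter> B a \<subseteq> B v"
    and H3: "B v \<inter> B b \<subseteq> B a \<or> B v \<inter> B a \<subseteq> B b"
  shows "map_pmf (\<lambda>h. h |` RS) (sc_from B mu a (v # b # post) f) =
         map_pmf (\<lambda>h. h |` RS) (sc_from B mu a (b # post) f)"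
proof -
  define Sv where "Sv = B v \<inter> B a"
  define T where "T = B b \<inter> B v"
  define S' where "S' = B b \<inter> B a"
  define f1 where "f1 g = f ++ g |` (B v - Sv)" for g
  define \<Phi> where "\<Phi> h = map_pmf (\<lambda>D. ((f ++ h |` (B b - S')) ++ D) |` RS) (sc_from B mu b post h)" for h
  have L1b: "sc_from B mu b post F = map_pmf (\<lambda>D. F ++ D) (sc_from B mu b post (F |` B b))"
    if "F |` B b \<in> set_pmf (mu b)" for F
    using L1[where N=N and mu=mu and B=B, OF supp cons bN postN that] .
  have S'T: "S' \<subseteq> T" and S'Sv: "S' \<subseteq> Sv" and Tv: "T \<subseteq> B v"
    using Sab unfolding S'_def T_def Sv_def by auto
  have P': "map_pmf (\<lambda>h. h |` RS) (sc_from B mu a (b # post) f)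
      = bind_pmf (cond_pmf (mu b) {h. h |` S' = f |` S'}) \<Phi>"
  proof -
    have "map_pmf (\<lambda>h. h |` RS) (sc_from B mu a (b # post) f)
      = bind_pmf (cond_pmf (mu b) {h. h |` S' = f |` S'})
          (\<lambda>h. map_pmf (\<lambda>h. h |` RS) (sc_from B mu b post (f ++ h |` (B b - S'))))"
      by (simp add: S'_def map_bind_pmf)
    also have "\<dots> = bind_pmf (cond_pmf (mu b) {h. h |` S' = f |` S'}) \<Phi>"
    proof (rule bind_pmf_cong[OF refl])
      fix h assume h: "h \<in> set_pmf (cond_pmf (mu b) {h. h |` S' = f |` S'})"
      note sf = step_facts[where N=N and mu=mu and B=B, OF supp cons aN bN inv h[unfolded S'_def]]
      have e: "(f ++ h |` (B b - S')) |` B b = h" using sf(4) unfolding S'_def .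
      have "sc_from B mu b post (f ++ h |` (B b - S'))
          = map_pmf (\<lambda>D. (f ++ h |` (B b - S')) ++ D) (sc_from B mu b post h)"
        using L1b[of "f ++ h |` (B b - S')"] e sf(1) by simp
      then show "map_pmf (\<lambda>h. h |` RS) (sc_from B mu b post (f ++ h |` (B b - S'))) = \<Phi> h"
        unfolding \<Phi>_def by (simp add: pmf.map_comp o_def)
    qed
    finally show ?thesis .
  qed
  have P: "map_pmf (\<lambda>h. h |` RS) (sc_from B mu a (v # b # post) f)
      = bind_pmf (cond_pmf (mu v) {g. g |` Sv = f |` Sv})
          (\<lambda>g. bind_pmf (cond_pmf (mu b) {h. h |` T = g |` T}) \<Phi>)"
  proof -
    have "map_pmf (\<lambda>h. h |` RS) (sc_from B mu a (v # b # post) f)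
      = bind_pmf (cond_pmf (mu v) {g. g |` Sv = f |` Sv})
          (\<lambda>g. bind_pmf (cond_pmf (mu b) {h. h |` T = f1 g |` T})
             (\<lambda>h. map_pmf (\<lambda>h. h |` RS) (sc_from B mu b post (f1 g ++ h |` (B b - T)))))"
      by (simp add: Sv_def T_def f1_def map_bind_pmf)
    also have "\<dots> = bind_pmf (cond_pmf (mu v) {g. g |` Sv = f |` Sv})
          (\<lambda>g. bind_pmf (cond_pmf (mu b) {h. h |` T = g |` T}) \<Phi>)"
    proof (rule bind_pmf_cong[OF refl])
      fix g assume g: "g \<in> set_pmf (cond_pmf (mu v) {g. g |` Sv = f |` Sv})"
      note sg = step_facts[where N=N and mu=mu and B=B, OF supp cons aN vN inv g[unfolded Sv_def]]
      have f1g: "f1 g |` B v = g" using sg(4) unfolding f1_def Sv_def .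
      have vT: "B v \<inter> T = T" using Tv by auto
      have f1T: "f1 g |` T = g |` T"
      proof -
        have "f1 g |` T = (f1 g |` B v) |` T" by (simp add: restrict_restrict vT)
        then show ?thesis using f1g by simp
      qed
      have setEq: "{h. h |` T = f1 g |` T} = {h. h |` T = g |` T}" using f1T by simp
      show "bind_pmf (cond_pmf (mu b) {h. h |` T = f1 g |` T})
             (\<lambda>h. map_pmf (\<lambda>h. h |` RS) (sc_from B mu b post (f1 g ++ h |` (B b - T))))
          = bind_pmf (cond_pmf (mu b) {h. h |` T = g |` T}) \<Phi>"
        unfolding setEq
      proof (rule bind_pmf_cong[OF refl])
        fix h assume h: "h \<in> set_pmf (cond_pmf (mu b) {h. h |` T = g |` T})"
        have h': "h \<in> set_pmf (cond_pmf (mu b) {h. h |` (B b \<inter> B v) = f1 g |` (B b \<inter> B v)})"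
          using h setEq unfolding T_def by simp
        have invv: "f1 g |` B v \<in> set_pmf (mu v)" using f1g sg(1) by simp
        note sh = step_facts[where N=N and mu=mu and B=B, OF supp cons vN bN invv h']
        have hT: "h |` T = g |` T" using sh(2) f1T unfolding T_def by simp
        have TS: "T \<inter> S' = S'" and SvS: "Sv \<inter> S' = S'" using S'T S'Sv by auto
        have "h |` S' = (h |` T) |` S'" by (simp add: restrict_restrict TS)
        also have "\<dots> = (g |` T) |` S'" using hT by simp
        also have "\<dots> = (g |` Sv) |` S'" by (simp add: restrict_restrict TS SvS)
        also have "\<dots> = (f |` Sv) |` S'" using sg(2) unfolding Sv_def by simp
        also have "\<dots> = f |` S'" by (simp add: restrict_restrict SvS)
        finally have hS: "h |` S' = f |` S'" .
        have K: "((f ++ g |` (B v - (B v \<inter> B a))) ++ h |` (B b - (B b \<inter> B v))) |` RS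
           = (f ++ h |` (B b - (B b \<inter> B a))) |` RS"
          by (rule key_eq[OF sg(3) sg(2) sh(3) sh(2)[unfolded f1_def Sv_def] hS[unfolded S'_def] H1])
        have K': "(f1 g ++ h |` (B b - T)) |` RS = (f ++ h |` (B b - S')) |` RS"
          using K unfolding f1_def Sv_def T_def S'_def .
        have e: "(f1 g ++ h |` (B b - T)) |` B b = h" using sh(4) unfolding T_def .
        have "sc_from B mu b post (f1 g ++ h |` (B b - T))
          = map_pmf (\<lambda>D. (f1 g ++ h |` (B b - T)) ++ D) (sc_from B mu b post h)"
          using L1b[of "f1 g ++ h |` (B b - T)"] e sh(1) by simp
        then show "map_pmf (\<lambda>h. h |` RS) (sc_from B mu b post (f1 g ++ h |` (B b - T))) = \<Phi> h"
          unfolding \<Phi>_def by (simp add: pmf.map_comp o_def restr_add_cong[OF K'])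
      qed
    qed
    finally show ?thesis .
  qed
  show ?thesis
  proof (cases "B v \<inter> B b \<subseteq> B a")
    case True
    have TS': "T = S'" using True Sab unfolding T_def S'_def by auto
    have TSv: "T \<inter> Sv = T" "Sv \<inter> T = T" using True unfolding T_def Sv_def by auto
    have "bind_pmf (cond_pmf (mu v) {g. g |` Sv = f |` Sv})
          (\<lambda>g. bind_pmf (cond_pmf (mu b) {h. h |` T = g |` T}) \<Phi>)
        = bind_pmf (cond_pmf (mu v) {g. g |` Sv = f |` Sv})
          (\<lambda>g. bind_pmf (cond_pmf (mu b) {h. h |` S' = f |` S'}) \<Phi>)"
    proof (rule bind_pmf_cong[OF refl])
      fix g assume g: "g \<in> set_pmf (cond_pmf (mu v) {g. g |` Sv = f |` Sv})"
      note sg = step_facts[where N=N and mu=mu and B=B, OF supp cons aN vN inv g[unfolded Sv_def]]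
      have "g |` T = (g |` Sv) |` T" by (simp add: restrict_restrict TSv)
      also have "\<dots> = (f |` Sv) |` T" using sg(2) unfolding Sv_def by simp
      also have "\<dots> = f |` T" by (simp add: restrict_restrict TSv)
      finally show "bind_pmf (cond_pmf (mu b) {h. h |` T = g |` T}) \<Phi>
          = bind_pmf (cond_pmf (mu b) {h. h |` S' = f |` S'}) \<Phi>" using TS' by simp
    qed
    then show ?thesis using P P' by (simp add: bind_pmf_const)
  next
    case False
    then have H: "B v \<inter> B a \<subseteq> B b" using H3 by blast
    have SvS': "Sv = S'" using H Sab unfolding Sv_def S'_def by auto
    have consT: "map_pmf (\<lambda>g. g |` T) (mu v) = map_pmf (\<lambda>g. g |` T) (mu b)"
      using cons[OF vN bN] unfolding T_def by (simp add: Int_commute)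
    have ne: "set_pmf (mu v) \<inter> {g. g |` S' = f |` S'} \<noteq> {}"
      using step_ne[OF cons[OF aN vN] inv] SvS' unfolding Sv_def by (simp add: Int_commute)
    have "bind_pmf (cond_pmf (mu v) {g. g |` Sv = f |` Sv})
          (\<lambda>g. bind_pmf (cond_pmf (mu b) {h. h |` T = g |` T}) \<Phi>)
        = bind_pmf (bind_pmf (cond_pmf (mu v) {g. g |` S' = f |` S'})
             (\<lambda>g. cond_pmf (mu b) {h. h |` T = g |` T})) \<Phi>"
      using SvS' by (simp add: bind_assoc_pmf)
    also have "\<dots> = bind_pmf (cond_pmf (mu b) {h. h |` S' = f |` S'}) \<Phi>"
      by (simp only: G[OF consT S'T ne])
    finally show ?thesis using P P' by simp
  qed
qed

lemma restrict_dom_id: assumes "dom g \<subseteq> A" shows "g |` A = g"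
proof (rule ext)
  fix x show "(g |` A) x = g x"
  proof (cases "x \<in> A")
    case False
    then have "x \<notin> dom g" using assms by auto
    then show ?thesis using False by (simp add: domIff)
  qed simp
qed

theorem lemma3p7:
  fixes P :: "'n list" and B :: "'n \<Rightarrow> 'v set" and mu :: "'n \<Rightarrow> ('v \<rightharpoonup> bool) pmf"
    and k :: nat and u w :: 'n
  assumes distinct: "distinct P"
    and finite_bags: "\<And>x. x \<in> set P \<Longrightarrow> finite (B x)"
    and contiguous: "\<And>a i j l. i \<le> j \<Longrightarrow> j \<le> l \<Longrightarrow> l < length P \<Longrightarrow>
                        a \<in> B (P ! i) \<Longrightarrow> a \<in> B (P ! l) \<Longrightarrow> a \<in> B (P ! j)"
    and mu_supp: "\<And>x. x \<in> set P \<Longrightarrow> set_pmf (mu x) \<subseteq> {f. dom f = B x}"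
    and consistent: "\<And>x y. x \<in> set P \<Longrightarrow> y \<in> set P \<Longrightarrow>
        map_pmf (\<lambda>g. g |` (B x \<inter> B y)) (mu x) = map_pmf (\<lambda>g. g |` (B x \<inter> B y)) (mu y)"
    and k_internal: "2 \<le> k" "k + 3 \<le> length P"
    and neighbours: "(u = P ! (k - 1) \<and> w = P ! (k + 1)) \<or> (u = P ! (k + 1) \<and> w = P ! (k - 1))"
    and sep: "B (P ! k) \<inter> B w \<subseteq> B u"
  shows "sc_round B mu (take k P @ drop (k + 1) P) =
         map_pmf (\<lambda>f. f |` (\<Union>x\<in>set (take k P @ drop (k + 1) P). B x)) (sc_round B mu P)"
proof -
  define RS where "RS = (\<Union>x\<in>set (take k P @ drop (k + 1) P). B x)"
  define a where "a = P ! (k - 1)"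
  define v where "v = P ! k"
  define b where "b = P ! (k + 1)"
  define post where "post = drop (k + 2) P"
  obtain p0 Q where PQ: "P = p0 # Q" using k_internal by (cases P) auto
  define mid where "mid = take (k - 2) Q"
  have tk1: "take (k - 1) P = p0 # mid"
  proof -
    have "k - 1 = Suc (k - 2)" using k_internal by simp
    then show ?thesis unfolding mid_def PQ by simp
  qed
  have tk: "take k P = p0 # mid @ [a]"
  proof -
    have "take (Suc (k - 1)) P = take (k - 1) P @ [P ! (k - 1)]"
      by (rule take_Suc_conv_app_nth) (use k_internal in auto)
    then show ?thesis using k_internal tk1 unfolding a_def by (simp add: Suc_diff_le)
  qed
  have dk1: "drop (k + 1) P = b # post"
  proof -
    have "drop (k + 1) P = P ! (k + 1) # drop (Suc (k + 1)) P"
      by (rule Cons_nth_drop_Suc[symmetric]) (use k_internal in simp)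
    then show ?thesis unfolding b_def post_def by simp
  qed
  have dk: "drop k P = v # b # post"
  proof -
    have "drop k P = P ! k # drop (Suc k) P"
      by (rule Cons_nth_drop_Suc[symmetric]) (use k_internal in simp)
    then show ?thesis unfolding v_def using dk1 by simp
  qed
  have Peq: "P = p0 # (mid @ [a]) @ v # b # post"
    using append_take_drop_id[of k P] tk dk by simp
  have P'eq: "take k P @ drop (k + 1) P = p0 # (mid @ [a]) @ b # post"
    using tk dk1 by simp
  have inP: "p0 \<in> set P" "set mid \<subseteq> set P" "a \<in> set P" "v \<in> set P" "b \<in> set P" "set post \<subseteq> set P"
    by (subst Peq; auto)+
  have lastm: "last (p0 # mid @ [a]) = a" by simp
  have kn: "k + 1 < length P" using k_internal by simp
  have Sab: "B b \<inter> B a \<subseteq> B v"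
  proof
    fix z assume "z \<in> B b \<inter> B a"
    then show "z \<in> B v" unfolding a_def b_def v_def
      using contiguous[of "k - 1" k "k + 1" z] kn by auto
  qed
  have H1: "z \<in> B a \<or> z \<in> B b" if zv: "z \<in> B v" and zR: "z \<in> RS" for z
  proof -
    obtain x where x: "x \<in> set (take k P @ drop (k + 1) P)" "z \<in> B x" using zR unfolding RS_def by auto
    show ?thesis
    proof (cases "x \<in> set (take k P)")
      case True
      then obtain i where i: "i < length (take k P)" "x = take k P ! i" by (auto simp: in_set_conv_nth)
      then have "i < k" "x = P ! i" by auto
      then have "z \<in> B (P ! (k - 1))" using contiguous[of i "k - 1" k z] kn x(2) zv unfolding v_def by auto
      then show ?thesis unfolding a_def by simp
    next
      case False
      then have "x \<in> set (drop (k + 1) P)" using x(1) by auto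
      then obtain j where j: "j < length (drop (k + 1) P)" "x = drop (k + 1) P ! j" by (auto simp: in_set_conv_nth)
      then have "k + 1 + j < length P" "x = P ! (k + 1 + j)" by auto
      then have "z \<in> B (P ! (k + 1))" using contiguous[of k "k + 1" "k + 1 + j" z] x(2) zv unfolding v_def by auto
      then show ?thesis unfolding b_def by simp
    qed
  qed
  have H3: "B v \<inter> B b \<subseteq> B a \<or> B v \<inter> B a \<subseteq> B b"
    using neighbours sep unfolding a_def b_def v_def by auto
  have RSsub: "B p0 \<subseteq> RS" "(\<Union>x\<in>set mid. B x) \<subseteq> RS" "B a \<subseteq> RS" "B b \<subseteq> RS" "(\<Union>x\<in>set post. B x) \<subseteq> RS"
    unfolding RS_def P'eq by auto
  note supp = mu_supp and cons = consistent
  have core': "map_pmf (\<lambda>h. h |` RS) (sc_from B mu a (v # b # post) f) = sc_from B mu a (b # post) f"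
    if finv: "f |` B a \<in> set_pmf (mu a)" and fdom: "dom f \<subseteq> RS" for f
  proof -
    have "map_pmf (\<lambda>h. h |` RS) (sc_from B mu a (v # b # post) f)
        = map_pmf (\<lambda>h. h |` RS) (sc_from B mu a (b # post) f)"
      by (rule core[where N="set P" and mu=mu and B=B, OF supp cons inP(3,4,5,6) finv H1 Sab H3])
    also have "\<dots> = map_pmf id (sc_from B mu a (b # post) f)"
    proof (rule map_pmf_cong[OF refl])
      fix h assume "h \<in> set_pmf (sc_from B mu a (b # post) f)"
      then have "dom h \<subseteq> dom f \<union> (\<Union>x\<in>set (b # post). B x)" by (rule dom_sc)
      then have "dom h \<subseteq> RS" using fdom RSsub by (simp only: set_simps UN_insert) blast
      then show "h |` RS = id h" by (simp add: restrict_dom_id)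
    qed
    finally show ?thesis by simp
  qed
  have "map_pmf (\<lambda>h. h |` RS) (sc_round B mu P)
      = bind_pmf (mu p0) (\<lambda>g. bind_pmf (sc_from B mu p0 (mid @ [a]) (g |` B p0))
           (\<lambda>f. map_pmf (\<lambda>h. h |` RS) (sc_from B mu a (v # b # post) f)))"
    by (subst Peq) (simp only: sc_round.simps sc_append lastm map_bind_pmf)
  also have "\<dots> = bind_pmf (mu p0) (\<lambda>g. bind_pmf (sc_from B mu p0 (mid @ [a]) (g |` B p0))
           (\<lambda>f. sc_from B mu a (b # post) f))"
  proof (rule bind_pmf_cong[OF refl])
    fix g assume g: "g \<in> set_pmf (mu p0)"
    have dg: "dom g = B p0" using supp[OF inP(1)] g by auto
    show "bind_pmf (sc_from B mu p0 (mid @ [a]) (g |` B p0))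
           (\<lambda>f. map_pmf (\<lambda>h. h |` RS) (sc_from B mu a (v # b # post) f))
        = bind_pmf (sc_from B mu p0 (mid @ [a]) (g |` B p0)) (\<lambda>f. sc_from B mu a (b # post) f)"
    proof (rule bind_pmf_cong[OF refl])
      fix f assume f: "f \<in> set_pmf (sc_from B mu p0 (mid @ [a]) (g |` B p0))"
      have ginv: "(g |` B p0) |` B p0 \<in> set_pmf (mu p0)" using g dg by (simp add: restrict_dom_id)
      have "f |` B (last (p0 # mid @ [a])) \<in> set_pmf (mu (last (p0 # mid @ [a])))"
        by (rule inv_sc[where N="set P" and mu=mu and B=B, OF supp cons inP(1) _ ginv f])
           (use inP in auto)
      then have finv: "f |` B a \<in> set_pmf (mu a)" by simp
      have "dom f \<subseteq> dom (g |` B p0) \<union> (\<Union>x\<in>set (mid @ [a]). B x)" using f by (rule dom_sc)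
      then have "dom f \<subseteq> RS" using RSsub dom_restrict[of g "B p0"] by (simp only: set_append set_simps UN_Un UN_insert UN_empty) blast
      then show "map_pmf (\<lambda>h. h |` RS) (sc_from B mu a (v # b # post) f) = sc_from B mu a (b # post) f"
        using core'[OF finv] by simp
    qed
  qed
  also have "\<dots> = sc_round B mu (take k P @ drop (k + 1) P)"
    by (subst P'eq) (simp only: sc_round.simps sc_append lastm)
  finally show ?thesis unfolding RS_def by simp
qed

end
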